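(* Let $1\le d\le n$. If $x\in\mathbb{R}^n$ satisfies $e_{d-1}(x)=0$, then $$|e_d(x)|\ge \frac{\binom{n}{d}}{(2n^{d+1})^{n-d}}\,|m_d(x)|.$$
   Context: $e_k(x)=\sum_{S\subseteq[n],|S|=k}\prod_{i\in S}x_i$ is the $k$-th elementary symmetric polynomial (with $e_0=1$), and $m_d(x)=\max_{S\subseteq[n],|S|=d}\prod_{i\in S}|x_i|$ is the product of the $d$ largest entries of $x$ in absolute value. *)

theory Defs
  imports "HOL-Analysis.Analysis"
begin

text \<open>Vectors x in R^n are represented as functions x :: nat => real, using only
the coordinates x 0, ..., x (n-1) (index set {..<n}).\<close>

definition esym :: "nat \<Rightarrow> nat \<Rightarrow> (nat \<Rightarrow> real) \<Rightarrow> real" where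
  "esym n k x = (\<Sum>S\<in>{S. S \<subseteq> {..<n} \<and> card S = k}. \<Prod>i\<in>S. x i)"

definition mprod :: "nat \<Rightarrow> nat \<Rightarrow> (nat \<Rightarrow> real) \<Rightarrow> real" where
  "mprod n d x = Max ((\<lambda>S. \<Prod>i\<in>S. \<bar>x i\<bar>) ` {S. S \<subseteq> {..<n} \<and> card S = d})"

end

theory Submission imports Defs "HOL-Computational_Algebra.Fundamental_Theorem_Algebra" begin


definition esymg :: "nat \<Rightarrow> nat \<Rightarrow> (nat \<Rightarrow> 'a::comm_ring_1) \<Rightarrow> 'a" where
  "esymg n k c = (\<Sum>S\<in>{S. S \<subseteq> {..<n} \<and> card S = k}. \<Prod>i\<in>S. c i)"

lemma esym_esymg: "esym n k x = esymg n k x"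
  by (simp add: esym_def esymg_def)

lemma fin_ksub: "finite {S. S \<subseteq> {..<n::nat} \<and> card S = k}"
  by (rule finite_subset[of _ "Pow {..<n}"]) auto

lemma esymg_0 [simp]: "esymg n 0 c = 1"
proof -
  have "{S. S \<subseteq> {..<n} \<and> card S = 0} = {{}}"
  proof (rule set_eqI, rule iffI)
    fix S assume "S \<in> {S. S \<subseteq> {..<n} \<and> card S = 0}"
    hence "S \<subseteq> {..<n}" "card S = 0" by auto
    moreover have "finite S" by (rule finite_subset[OF \<open>S \<subseteq> {..<n}\<close>]) simp
    ultimately show "S \<in> {{}}" by simp
  qed auto
  thus ?thesis by (simp add: esymg_def)
qed

lemma esymg_big: "n < k \<Longrightarrow> esymg n k c = 0"
proof -
  assume "n < k"
  have e: "{S. S \<subseteq> {..<n} \<and> card S = k} = {}"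
  proof (rule equals0I)
    fix S assume S: "S \<in> {S. S \<subseteq> {..<n} \<and> card S = k}"
    hence "card S \<le> n" using card_mono[OF finite_lessThan, of S n] by simp
    thus False using \<open>n<k\<close> S by simp
  qed
  show ?thesis unfolding esymg_def e by simp
qed

lemma esymg_Suc: "esymg (Suc n) (Suc k) c = esymg n (Suc k) c + c n * esymg n k c"
proof -
  let ?A = "{S. S \<subseteq> {..<n} \<and> card S = Suc k}"
  let ?B0 = "{S. S \<subseteq> {..<n} \<and> card S = k}"
  have split: "{S. S \<subseteq> {..<Suc n} \<and> card S = Suc k} = ?A \<union> insert n ` ?B0"
  proof (rule set_eqI, rule iffI)
    fix S assume S: "S \<in> {S. S \<subseteq> {..<Suc n} \<and> card S = Suc k}"
    show "S \<in> ?A \<union> insert n ` ?B0"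
    proof (cases "n \<in> S")
      case True
      have fS: "finite S" by (rule finite_subset[of _ "{..<Suc n}"]) (use S in auto)
      have "S - {n} \<subseteq> {..<n}" using S by auto
      moreover have "card (S - {n}) = k" using S True fS by auto
      moreover have "S = insert n (S - {n})" using True by auto
      ultimately show ?thesis by blast
    next
      case False
      have "S \<subseteq> {..<n}" using S False by (auto simp: less_Suc_eq)
      then show ?thesis using S by blast
    qed
  next
    fix S assume "S \<in> ?A \<union> insert n ` ?B0"
    then show "S \<in> {S. S \<subseteq> {..<Suc n} \<and> card S = Suc k}"
    proof
      assume "S \<in> ?A" thus ?thesis by (auto simp: less_Suc_eq)
    next
      assume "S \<in> insert n ` ?B0"
      then obtain T where T: "T \<subseteq> {..<n}" "card T = k" "S = insert n T" by auto
      have "finite T" by (rule finite_subset[of _ "{..<n}"]) (use T(1) in auto)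
      moreover have "n \<notin> T" using T(1) by auto
      ultimately have "card S = Suc k" using T by simp
      moreover have "S \<subseteq> {..<Suc n}" using T by (auto simp: less_Suc_eq)
      ultimately show ?thesis by blast
    qed
  qed
  have disj: "?A \<inter> insert n ` ?B0 = {}" by blast
  have inj: "inj_on (insert n) ?B0"
  proof (rule inj_onI)
    fix A B assume A: "A \<in> ?B0" and B: "B \<in> ?B0" and AB: "insert n A = insert n B"
    have "n \<notin> A" "n \<notin> B" using A B by auto
    thus "A = B" using AB insert_ident by metis
  qed
  have "esymg (Suc n) (Suc k) c = (\<Sum>S\<in>?A. \<Prod>i\<in>S. c i) + (\<Sum>S\<in>insert n ` ?B0. \<Prod>i\<in>S. c i)"
    unfolding esymg_def split
    by (rule sum.union_disjoint[OF fin_ksub finite_imageI[OF fin_ksub] disj])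
  also have "(\<Sum>S\<in>insert n ` ?B0. \<Prod>i\<in>S. c i) = (\<Sum>T\<in>?B0. \<Prod>i\<in>insert n T. c i)"
    by (rule sum.reindex[OF inj, unfolded comp_def])
  also have "\<dots> = (\<Sum>T\<in>?B0. c n * (\<Prod>i\<in>T. c i))"
  proof (rule sum.cong[OF refl])
    fix T assume "T \<in> ?B0"
    hence T: "T \<subseteq> {..<n}" by simp
    have "finite T" by (rule finite_subset[OF T]) simp
    moreover have "n \<notin> T" using T by auto
    ultimately show "(\<Prod>i\<in>insert n T. c i) = c n * (\<Prod>i\<in>T. c i)" by simp
  qed
  also have "\<dots> = c n * esymg n k c" by (simp add: esymg_def sum_distrib_left)
  finally show ?thesis by (simp add: esymg_def)
qed

lemma coeff_prod_lin:
  fixes c :: "nat \<Rightarrow> 'a::comm_ring_1"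
  shows "k \<le> n \<Longrightarrow> coeff (\<Prod>i<n. [:c i, 1:]) k = esymg n (n - k) c"
proof (induction n arbitrary: k)
  case 0 thus ?case by simp
next
  case (Suc n)
  let ?P = "\<Prod>i<n. [:c i, 1:]"
  have P: "(\<Prod>i<Suc n. [:c i, 1:]) = smult (c n) ?P + pCons 0 ?P"
    by (simp add: algebra_simps)
  have degP: "degree ?P \<le> n"
  proof -
    have "degree ?P \<le> (\<Sum>i<n. degree [:c i, 1:])" by (rule order.trans[OF degree_prod_sum_le]) simp_all
    also have "\<dots> = n" by simp
    finally show ?thesis .
  qed
  show ?case
  proof (cases k)
    case 0
    thus ?thesis using P Suc.IH[of 0] by (simp add: esymg_Suc esymg_big)
  next
    case (Suc k')
    show ?thesis
    proof (cases "k' = n")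
      case True
      have "coeff ?P (Suc n) = 0" using degP by (simp add: coeff_eq_0)
      thus ?thesis using P Suc.IH[of n] True \<open>k = Suc k'\<close> by simp
    next
      case False
      hence "Suc k' \<le> n" using Suc.prems \<open>k = Suc k'\<close> by simp
      have e: "Suc n - k = Suc (n - Suc k')" using \<open>Suc k' \<le> n\<close> \<open>k = Suc k'\<close> by simp
      have e2: "n - k' = Suc (n - Suc k')" using \<open>Suc k' \<le> n\<close> by simp
      show ?thesis using P Suc.IH[of "Suc k'"] Suc.IH[of k'] \<open>Suc k' \<le> n\<close> \<open>k = Suc k'\<close>
        by (simp add: e e2 esymg_Suc algebra_simps)
    qed
  qed
qed



lemma esymg_of_real: "esymg n k (\<lambda>i. complex_of_real (x i)) = complex_of_real (esym n k x)"
  by (simp add: esymg_def esym_def of_real_sum of_real_prod)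

lemma pderiv_lin: "pderiv [:a, 1:] = (1 :: complex poly)"
  by (simp add: pderiv_pCons)

lemma deriv_roots:
  fixes x :: "nat \<Rightarrow> real" assumes n1: "n \<ge> 1"
  shows "\<exists>y. \<forall>j \<le> n - 1. real n * esym (n-1) j y = real (n - j) * esym n j x"
proof -
  define c where "c i = complex_of_real (x i)" for i
  define P where "P = (\<Prod>i<n. [:c i, 1:])"
  have degP: "degree P = n"
    unfolding P_def by (subst degree_prod_sum_eq) auto
  have lcP: "lead_coeff P = 1"
    unfolding P_def by (simp add: lead_coeff_prod)
  have degD: "degree (pderiv P) = n - 1" by (simp add: degree_pderiv degP)
  have lcD: "lead_coeff (pderiv P) = of_nat n"
    using n1 by (simp add: degD coeff_pderiv degP[symmetric] lcP)
  obtain root where dec: "smult (lead_coeff (pderiv P)) (\<Prod>i<degree (pderiv P). [:-root i, 1:]) = pderiv P"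
    using complex_poly_decompose' by blast
  have Pz: "poly P z = (\<Prod>j<n. z + c j)" for z
    unfolding P_def by (simp add: poly_prod add.commute)
  have dP: "pderiv P = (\<Sum>j<n. \<Prod>l\<in>{..<n} - {j}. [:c l, 1:])"
    unfolding P_def by (simp add: pderiv_prod pderiv_lin)
  have real: "Im (root i) = 0" if i: "i < n - 1" for i
  proof (rule ccontr)
    assume nz: "Im (root i) \<noteq> 0"
    define z where "z = root i"
    have "poly (pderiv P) z = 0"
    proof -
      have "poly (\<Prod>i<degree (pderiv P). [:-root i, 1:]) z = (\<Prod>k<n-1. z - root k)"
        by (simp add: poly_prod degD)
      also have "\<dots> = 0" using i by (auto simp: z_def)
      finally show ?thesis by (subst dec[symmetric]) simp
    qed
    have ne: "z + c j \<noteq> 0" for j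
    proof
      assume "z + c j = 0"
      hence "Im (z + c j) = 0" by simp
      thus False using nz by (simp add: z_def c_def)
    qed
    have "poly (pderiv P) z = (\<Sum>j<n. \<Prod>l\<in>{..<n} - {j}. z + c l)"
      unfolding dP by (simp add: poly_sum poly_prod add.commute)
    also have "\<dots> = (\<Sum>j<n. poly P z / (z + c j))"
    proof (rule sum.cong[OF refl])
      fix j assume "j \<in> {..<n}"
      hence "(\<Prod>l<n. z + c l) = (z + c j) * (\<Prod>l\<in>{..<n} - {j}. z + c l)"
        by (subst prod.remove[of _ j]) auto
      thus "(\<Prod>l\<in>{..<n} - {j}. z + c l) = poly P z / (z + c j)"
        using ne[of j] by (simp add: Pz field_simps)
    qed
    also have "\<dots> = poly P z * (\<Sum>j<n. 1 / (z + c j))"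
      by (simp add: sum_distrib_left)
    finally have "poly P z * (\<Sum>j<n. 1 / (z + c j)) = 0"
      using \<open>poly (pderiv P) z = 0\<close> by simp
    moreover have "poly P z \<noteq> 0" unfolding Pz using ne by simp
    ultimately have s0: "(\<Sum>j<n. 1 / (z + c j)) = 0" by simp
    define D where "D j = (Re (z + c j))^2 + (Im (z + c j))^2" for j
    have Dpos: "D j > 0" for j
    proof -
      have "(Im (z + c j))^2 > 0" using nz by (simp add: z_def c_def)
      thus ?thesis unfolding D_def by (simp add: add_nonneg_pos)
    qed
    have "Im (\<Sum>j<n. 1 / (z + c j)) = (\<Sum>j<n. - Im z / D j)"
    proof -
      have "Im (1 / (z + c j)) = - Im z / D j" for j
        by (simp add: Im_divide D_def c_def power2_eq_square)
      thus ?thesis by (simp add: Im_sum)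
    qed
    also have "\<dots> = - Im z * (\<Sum>j<n. 1 / D j)"
      by (simp add: sum_distrib_left)
    finally have "Im z * (\<Sum>j<n. 1 / D j) = 0" using s0 by simp
    moreover have "(\<Sum>j<n. 1 / D j) > 0"
      using n1 Dpos by (intro sum_pos) (auto simp: lessThan_empty_iff)
    ultimately show False using nz by (simp add: z_def)
  qed
  define y where "y j = - Re (root j)" for j
  have "pderiv P = smult (of_nat n) (\<Prod>i<n-1. [:complex_of_real (y i), 1:])"
  proof -
    have "(\<Prod>i<n-1. [:-root i, 1:]) = (\<Prod>i<n-1. [:complex_of_real (y i), 1:])"
    proof (rule prod.cong[OF refl])
      fix i assume "i \<in> {..<n-1}"
      hence "Im (root i) = 0" using real by simp
      hence "complex_of_real (Re (root i)) = root i" by (simp add: complex_eq_iff)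
      thus "[:-root i, 1:] = [:complex_of_real (y i), 1:]" by (simp add: y_def)
    qed
    thus ?thesis using dec lcD degD by simp
  qed
  hence coef: "coeff (pderiv P) k = of_nat n * esymg (n-1) (n-1-k) (\<lambda>i. complex_of_real (y i))"
    if "k \<le> n - 1" for k
    using that by (simp add: coeff_prod_lin)
  show ?thesis
  proof (intro exI allI impI)
    fix j assume j: "j \<le> n - 1"
    define k where "k = n - 1 - j"
    have k: "k \<le> n - 1" "n - 1 - k = j" "Suc k \<le> n" "n - Suc k = j" "Suc k = n - j"
      using j n1 by (auto simp: k_def)
    have "coeff (pderiv P) k = of_nat (Suc k) * coeff P (Suc k)" by (rule coeff_pderiv)
    also have "coeff P (Suc k) = esymg n j c"
      unfolding P_def using k by (simp add: coeff_prod_lin)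
    finally have "of_nat (n - j) * esymg n j c = of_nat n * esymg (n-1) j (\<lambda>i. complex_of_real (y i))"
      using coef[OF k(1)] k by simp
    hence "complex_of_real (real (n - j) * esym n j x) = complex_of_real (real n * esym (n-1) j y)"
      by (simp add: esymg_of_real c_def[abs_def])
    thus "real n * esym (n-1) j y = real (n - j) * esym n j x"
      by (simp only: of_real_eq_iff)
  qed
qed



definition E :: "nat \<Rightarrow> nat \<Rightarrow> (nat \<Rightarrow> real) \<Rightarrow> real" where
  "E n j x = esym n j x / real (n choose j)"

lemma deriv_iter:
  "m \<le> n \<Longrightarrow> \<exists>y. \<forall>j\<le>m. E m j y = E n j (x :: nat \<Rightarrow> real)"
proof (induction n arbitrary: x)
  case 0 thus ?case by auto
next
  case (Suc n)
  show ?case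
  proof (cases "m = Suc n")
    case True thus ?thesis by auto
  next
    case False
    hence m: "m \<le> n" using Suc.prems by simp
    obtain y1 where y1: "\<forall>j \<le> Suc n - 1. real (Suc n) * esym (Suc n - 1) j y1 = real (Suc n - j) * esym (Suc n) j x"
      using deriv_roots[of "Suc n" x] by auto
    have Ey1: "E n j y1 = E (Suc n) j x" if "j \<le> n" for j
    proof -
      have b: "real (Suc n - j) * real (Suc n choose j) = real (Suc n) * real (n choose j)"
        using binomial_absorb_comp[of "Suc n" j] by (metis diff_Suc_1 of_nat_mult)
      have pos: "real (n choose j) > 0" "real (Suc n choose j) > 0" using that by auto
      have e: "real (Suc n) * esym n j y1 = real (Suc n - j) * esym (Suc n) j x" using y1 that by simp
      have q: "real (Suc n - j) / real (Suc n) = real (n choose j) / real (Suc n choose j)"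
        by (subst frac_eq_eq) (use b pos in auto)
      have "esym n j y1 = (real (Suc n - j) / real (Suc n)) * esym (Suc n) j x"
        using e by (simp add: field_simps)
      also have "\<dots> = real (n choose j) * esym (Suc n) j x / real (Suc n choose j)"
        unfolding q by simp
      finally show ?thesis unfolding E_def using pos by (simp add: field_simps)
    qed
    obtain y where y: "\<forall>j\<le>m. E m j y = E n j y1" using Suc.IH[OF m] by blast
    show ?thesis using y Ey1 m by (intro exI[of _ y]) auto
  qed
qed

lemma esym_n_n: "esym n n x = (\<Prod>i<n. x i)"
proof -
  have "{S. S \<subseteq> {..<n} \<and> card S = n} = {{..<n}}"
  proof (rule set_eqI, rule iffI)
    fix S assume "S \<in> {S. S \<subseteq> {..<n} \<and> card S = n}"
    hence "S \<subseteq> {..<n}" "card S = card {..<n}" by auto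
    thus "S \<in> {{..<n}}" using card_subset_eq[of "{..<n}" S] by simp
  qed auto
  thus ?thesis by (simp add: esym_def)
qed

lemma esym_recip:
  assumes nz: "\<And>i. i < n \<Longrightarrow> x i \<noteq> 0" and j: "j \<le> n"
  shows "esym n j (\<lambda>i. 1 / x i) * (\<Prod>i<n. x i) = esym n (n - j) x"
proof -
  let ?K = "\<lambda>k. {S. S \<subseteq> {..<n} \<and> card S = k}"
  have bij: "bij_betw (\<lambda>S. {..<n} - S) (?K j) (?K (n - j))"
  proof (rule bij_betw_byWitness[where f' = "\<lambda>S. {..<n} - S"])
    show "\<forall>S\<in>?K j. {..<n} - ({..<n} - S) = S" by auto
    show "\<forall>S\<in>?K (n-j). {..<n} - ({..<n} - S) = S" by auto
    show "(\<lambda>S. {..<n} - S) ` ?K j \<subseteq> ?K (n - j)"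
    proof
      fix T assume "T \<in> (\<lambda>S. {..<n} - S) ` ?K j"
      then obtain S where S: "S \<subseteq> {..<n}" "card S = j" "T = {..<n} - S" by auto
      have "finite S" by (rule finite_subset[OF S(1)]) simp
      thus "T \<in> ?K (n - j)" using S by (simp add: card_Diff_subset)
    qed
    show "(\<lambda>S. {..<n} - S) ` ?K (n - j) \<subseteq> ?K j"
    proof
      fix T assume "T \<in> (\<lambda>S. {..<n} - S) ` ?K (n - j)"
      then obtain S where S: "S \<subseteq> {..<n}" "card S = n - j" "T = {..<n} - S" by auto
      have "finite S" by (rule finite_subset[OF S(1)]) simp
      thus "T \<in> ?K j" using S j by (simp add: card_Diff_subset)
    qed
  qed
  have "esym n j (\<lambda>i. 1 / x i) * (\<Prod>i<n. x i) = (\<Sum>S\<in>?K j. (\<Prod>i\<in>S. 1 / x i) * (\<Prod>i<n. x i))"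
    by (simp add: esym_def sum_distrib_right)
  also have "\<dots> = (\<Sum>S\<in>?K j. \<Prod>i\<in>{..<n} - S. x i)"
  proof (rule sum.cong[OF refl])
    fix S assume S: "S \<in> ?K j"
    hence sub: "S \<subseteq> {..<n}" by auto
    have "(\<Prod>i<n. x i) = (\<Prod>i\<in>{..<n} - S. x i) * (\<Prod>i\<in>S. x i)"
      using prod.subset_diff[OF sub] by simp
    moreover have "(\<Prod>i\<in>S. 1 / x i) * (\<Prod>i\<in>S. x i) = 1"
    proof -
      have "(\<Prod>i\<in>S. 1 / x i) * (\<Prod>i\<in>S. x i) = (\<Prod>i\<in>S. 1 / x i * x i)"
        by (rule prod.distrib[symmetric])
      also have "\<dots> = 1" using nz sub by (intro prod.neutral) auto
      finally show ?thesis .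
    qed
    ultimately show "(\<Prod>i\<in>S. 1 / x i) * (\<Prod>i<n. x i) = (\<Prod>i\<in>{..<n} - S. x i)"
      by (metis mult.commute mult.left_commute mult_1_right)
  qed
  also have "\<dots> = (\<Sum>T\<in>?K (n - j). \<Prod>i\<in>T. x i)"
    by (rule sum.reindex_bij_betw[OF bij])
  finally show ?thesis by (simp add: esym_def)
qed

lemma E_recip:
  assumes nz: "\<And>i. i < n \<Longrightarrow> x i \<noteq> 0" and j: "j \<le> n"
  shows "E n j (\<lambda>i. 1 / x i) = E n (n - j) x / (\<Prod>i<n. x i)"
proof -
  have p: "(\<Prod>i<n. x i) \<noteq> 0" using nz by simp
  have "esym n j (\<lambda>i. 1 / x i) = esym n (n - j) x / (\<Prod>i<n. x i)"
    using esym_recip[OF nz j] p by (simp add: field_simps)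
  thus ?thesis unfolding E_def using binomial_symmetric[OF j] by simp
qed



lemma E_n_n: "E n n x = (\<Prod>i<n. x i)"
  by (simp add: E_def esym_n_n)

lemma window:
  fixes x :: "nat \<Rightarrow> real"
  assumes an: "a + N \<le> n" and ea: "esym n a x \<noteq> 0" and eaN: "esym n (a+N) x \<noteq> 0"
  shows "\<exists>z l. l \<noteq> 0 \<and> (\<forall>j\<le>N. E n (a+j) x = l * E N j z)"
proof -
  obtain w where w: "\<forall>j\<le>a+N. E (a+N) j w = E n j x" using deriv_iter[OF an] by blast
  have Ena: "E n a x \<noteq> 0" "E n (a+N) x \<noteq> 0" using ea eaN an by (auto simp: E_def)
  have pw: "(\<Prod>i<a+N. w i) \<noteq> 0" using w Ena(2) by (simp add: E_n_n[symmetric])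
  hence wnz: "w i \<noteq> 0" if "i < a + N" for i using that by simp
  define u where "u i = 1 / w i" for i
  have Eu: "E (a+N) k u = E (a+N) (a+N-k) w / (\<Prod>i<a+N. w i)" if "k \<le> a+N" for k
    unfolding u_def by (rule E_recip[OF wnz that])
  obtain v where v: "\<forall>j\<le>N. E N j v = E (a+N) j u" using deriv_iter[of N "a+N" u] by auto
  have pv: "(\<Prod>i<N. v i) \<noteq> 0"
  proof -
    have "(\<Prod>i<N. v i) = E (a+N) N u" using v by (simp add: E_n_n[symmetric])
    also have "\<dots> = E n a x / (\<Prod>i<a+N. w i)" using Eu[of N] w by simp
    finally show ?thesis using Ena pw by simp
  qed
  hence vnz: "v i \<noteq> 0" if "i < N" for i using that by simp
  define z where "z i = 1 / v i" for i
  show ?thesis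
  proof (intro exI conjI allI impI)
    show "(\<Prod>i<a+N. w i) * (\<Prod>i<N. v i) \<noteq> 0" using pw pv by simp
    fix j assume j: "j \<le> N"
    have "E N j z = E N (N - j) v / (\<Prod>i<N. v i)"
      unfolding z_def by (rule E_recip[OF vnz j])
    also have "E N (N - j) v = E (a+N) (N - j) u" using v by simp
    also have "\<dots> = E (a+N) (a + j) w / (\<Prod>i<a+N. w i)"
      using Eu[of "N - j"] j by simp
    also have "E (a+N) (a + j) w = E n (a+j) x" using w j by simp
    finally show "E n (a+j) x = (\<Prod>i<a+N. w i) * (\<Prod>i<N. v i) * E N j z"
      using pw pv by (simp add: field_simps)
  qed
qed



lemma coeff_prod_lin2:
  fixes c :: "nat \<Rightarrow> 'a::comm_ring_1"
  shows "coeff (\<Prod>i<n. [:1, c i:]) k = esymg n k c"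
proof (induction n arbitrary: k)
  case 0 thus ?case by (cases k) (auto simp: esymg_big)
next
  case (Suc n)
  let ?P = "\<Prod>i<n. [:1, c i:]"
  have P: "(\<Prod>i<Suc n. [:1, c i:]) = ?P + smult (c n) (pCons 0 ?P)"
    by (simp add: algebra_simps)
  show ?case
  proof (cases k)
    case 0 thus ?thesis using P Suc.IH[of 0] by simp
  next
    case (Suc k')
    thus ?thesis using P Suc.IH[of k] Suc.IH[of k'] by (simp add: esymg_Suc)
  qed
qed

lemma coeff_prod_quad:
  fixes c :: "nat \<Rightarrow> 'a::comm_ring_1"
  shows "coeff (\<Prod>i<n. [:1, 0, c i:]) (2*k) = esymg n k c"
proof (induction n arbitrary: k)
  case 0 thus ?case by (cases k) (auto simp: esymg_big)
next
  case (Suc n)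
  let ?P = "\<Prod>i<n. [:1, 0, c i:]"
  have P: "(\<Prod>i<Suc n. [:1, 0, c i:]) = ?P + smult (c n) (pCons 0 (pCons 0 ?P))"
    by (simp add: algebra_simps)
  show ?case
  proof (cases k)
    case 0 thus ?thesis using P Suc.IH[of 0] by simp
  next
    case (Suc k')
    have "2 * k = Suc (Suc (2 * k'))" using Suc by simp
    thus ?thesis using P Suc.IH[of k] Suc.IH[of k'] \<open>k = Suc k'\<close> by (simp add: esymg_Suc)
  qed
qed

lemma esymg_neg: "esymg n k (\<lambda>i. - c i) = (-1)^k * esymg n k (c :: nat \<Rightarrow> 'a::comm_ring_1)"
proof -
  have "esymg n k (\<lambda>i. - c i) = (\<Sum>S\<in>{S. S \<subseteq> {..<n} \<and> card S = k}. (-1)^k * (\<Prod>i\<in>S. c i))"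
    unfolding esymg_def
  proof (rule sum.cong[OF refl])
    fix S assume "S \<in> {S. S \<subseteq> {..<n} \<and> card S = k}"
    hence "card S = k" by simp
    thus "(\<Prod>i\<in>S. - c i) = (-1)^k * (\<Prod>i\<in>S. c i)"
      by (simp add: prod_uminus)
  qed
  thus ?thesis by (simp add: esymg_def sum_distrib_left)
qed

lemma sq_identity:
  "(\<Sum>j\<le>2*k. (-1)^j * (esym n j x * esym n (2*k-j) x)) = (-1)^k * esym n k (\<lambda>i. (x i)^2)"
proof -
  let ?A = "\<Prod>i<n. [:1, x i:]"
  let ?B = "\<Prod>i<n. [:1, - x i:]"
  have AB: "?A * ?B = (\<Prod>i<n. [:1, 0, - ((x i)^2) :])"
  proof -
    have "?A * ?B = (\<Prod>i<n. [:1, x i:] * [:1, - x i:])" by (rule prod.distrib[symmetric])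
    also have "\<dots> = (\<Prod>i<n. [:1, 0, - ((x i)^2) :])"
      by (rule prod.cong[OF refl]) (simp add: power2_eq_square)
    finally show ?thesis .
  qed
  have "coeff (?A * ?B) (2*k) = (\<Sum>j\<le>2*k. coeff ?A j * coeff ?B (2*k - j))"
    by (rule coeff_mult)
  also have "\<dots> = (\<Sum>j\<le>2*k. (-1)^j * (esym n j x * esym n (2*k-j) x))"
  proof (rule sum.cong[OF refl])
    fix j assume "j \<in> {..2*k}"
    hence "(-1::real)^(2*k - j) = (-1)^j"
    proof -
      have "j \<le> 2*k" using \<open>j \<in> {..2*k}\<close> by simp
      hence "(-1::real)^(2*k - j) = (-1)^(2*k + j)" by (rule neg_one_power_add_eq_neg_one_power_diff[symmetric])
      also have "\<dots> = (-1)^j" by (simp add: power_add)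
      finally show ?thesis .
    qed
    thus "coeff ?A j * coeff ?B (2*k - j) = (-1)^j * (esym n j x * esym n (2*k-j) x)"
      by (simp add: coeff_prod_lin2 esymg_neg[of n _ x] esym_esymg)
  qed
  finally have "(\<Sum>j\<le>2*k. (-1)^j * (esym n j x * esym n (2*k-j) x)) = coeff (\<Prod>i<n. [:1, 0, - ((x i)^2) :]) (2*k)"
    using AB by simp
  also have "\<dots> = (-1)^k * esym n k (\<lambda>i. (x i)^2)"
    by (simp add: coeff_prod_quad esymg_neg[of n k "\<lambda>i. (x i)^2"] esym_esymg)
  finally show ?thesis .
qed



lemma compl_bij:
  assumes j: "j \<le> n"
  shows "bij_betw (\<lambda>S. {..<n} - S) {S. S \<subseteq> {..<n} \<and> card S = j} {S. S \<subseteq> {..<n} \<and> card S = n - j}"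
proof (rule bij_betw_byWitness[where f' = "\<lambda>S. {..<n} - S"])
  let ?K = "\<lambda>k. {S. S \<subseteq> {..<n} \<and> card S = k}"
  show "\<forall>S\<in>?K j. {..<n} - ({..<n} - S) = S" by auto
  show "\<forall>S\<in>?K (n-j). {..<n} - ({..<n} - S) = S" by auto
  show "(\<lambda>S. {..<n} - S) ` ?K j \<subseteq> ?K (n - j)"
  proof
    fix T assume "T \<in> (\<lambda>S. {..<n} - S) ` ?K j"
    then obtain S where S: "S \<subseteq> {..<n}" "card S = j" "T = {..<n} - S" by auto
    have "finite S" by (rule finite_subset[OF S(1)]) simp
    thus "T \<in> ?K (n - j)" using S by (simp add: card_Diff_subset)
  qed
  show "(\<lambda>S. {..<n} - S) ` ?K (n - j) \<subseteq> ?K j"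
  proof
    fix T assume "T \<in> (\<lambda>S. {..<n} - S) ` ?K (n - j)"
    then obtain S where S: "S \<subseteq> {..<n}" "card S = n - j" "T = {..<n} - S" by auto
    have "finite S" by (rule finite_subset[OF S(1)]) simp
    thus "T \<in> ?K j" using S j by (simp add: card_Diff_subset)
  qed
qed

lemma card_ksub: "card {S. S \<subseteq> {..<n::nat} \<and> card S = k} = n choose k"
  using n_subsets[of "{..<n}" k] by simp

lemma mprod_props:
  fixes x :: "nat \<Rightarrow> real"
  assumes "d \<le> n"
  shows "mprod n d x \<ge> 0" "(mprod n d x)^2 \<le> esym n d (\<lambda>i. (x i)^2)"
proof -
  let ?K = "{S. S \<subseteq> {..<n} \<and> card S = d}"
  have "{..<d} \<in> ?K" using assms by auto
  hence ne: "?K \<noteq> {}" by blast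
  have "mprod n d x \<in> (\<lambda>S. \<Prod>i\<in>S. \<bar>x i\<bar>) ` ?K"
    unfolding mprod_def by (rule Max_in) (use fin_ksub ne in auto)
  then obtain S where S: "S \<in> ?K" "mprod n d x = (\<Prod>i\<in>S. \<bar>x i\<bar>)" by auto
  show "mprod n d x \<ge> 0" using S by (simp add: prod_nonneg)
  have "(mprod n d x)^2 = (\<Prod>i\<in>S. (x i)^2)"
    using S unfolding abs_prod[symmetric] by (simp add: prod_power_distrib[symmetric])
  also have "\<dots> \<le> (\<Sum>T\<in>?K. \<Prod>i\<in>T. (x i)^2)"
    by (rule member_le_sum[OF S(1)]) (auto intro: prod_nonneg fin_ksub)
  finally show "(mprod n d x)^2 \<le> esym n d (\<lambda>i. (x i)^2)" by (simp add: esym_def)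
qed

lemma amgm_half:
  fixes z :: "nat \<Rightarrow> real"
  shows "real ((2*i) choose i) * \<bar>\<Prod>l<2*i. z l\<bar> \<le> esym (2*i) i (\<lambda>l. (z l)^2)"
proof -
  let ?n = "2*i"
  let ?K = "{S. S \<subseteq> {..<?n} \<and> card S = i}"
  have bij: "bij_betw (\<lambda>S. {..<?n} - S) ?K ?K"
    using compl_bij[of i ?n] by simp
  have key: "2 * \<bar>\<Prod>l<?n. z l\<bar> \<le> (\<Prod>l\<in>S. (z l)^2) + (\<Prod>l\<in>{..<?n} - S. (z l)^2)"
    if S: "S \<in> ?K" for S
  proof -
    define a where "a = (\<Prod>l\<in>S. \<bar>z l\<bar>)"
    define b where "b = (\<Prod>l\<in>{..<?n} - S. \<bar>z l\<bar>)"
    have sub: "S \<subseteq> {..<?n}" using S by simp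
    have "\<bar>\<Prod>l<?n. z l\<bar> = (\<Prod>l<?n. \<bar>z l\<bar>)" by (simp add: abs_prod)
    also have "\<dots> = b * a" unfolding a_def b_def using prod.subset_diff[OF sub] by simp
    finally have e: "\<bar>\<Prod>l<?n. z l\<bar> = a * b" by simp
    have a2: "a^2 = (\<Prod>l\<in>S. (z l)^2)" unfolding a_def abs_prod[symmetric]
      by (simp add: prod_power_distrib[symmetric])
    have b2: "b^2 = (\<Prod>l\<in>{..<?n} - S. (z l)^2)" unfolding b_def abs_prod[symmetric]
      by (simp add: prod_power_distrib[symmetric])
    have "2 * (a * b) \<le> a^2 + b^2" using sum_squares_bound[of a b] by simp
    thus ?thesis using e a2 b2 by simp
  qed
  have "(\<Sum>S\<in>?K. 2 * \<bar>\<Prod>l<?n. z l\<bar>) \<le> (\<Sum>S\<in>?K. (\<Prod>l\<in>S. (z l)^2) + (\<Prod>l\<in>{..<?n} - S. (z l)^2))"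
    by (rule sum_mono) (rule key)
  also have "\<dots> = (\<Sum>S\<in>?K. \<Prod>l\<in>S. (z l)^2) + (\<Sum>S\<in>?K. \<Prod>l\<in>{..<?n} - S. (z l)^2)"
    by (rule sum.distrib)
  also have "(\<Sum>S\<in>?K. \<Prod>l\<in>{..<?n} - S. (z l)^2) = (\<Sum>S\<in>?K. \<Prod>l\<in>S. (z l)^2)"
    using sum.reindex_bij_betw[OF bij, of "\<lambda>S. \<Prod>l\<in>S. (z l)^2"] by simp
  finally have "real (card ?K) * (2 * \<bar>\<Prod>l<?n. z l\<bar>) \<le> 2 * esym ?n i (\<lambda>l. (z l)^2)"
    by (simp add: esym_def)
  thus ?thesis by (simp add: card_ksub)
qed



lemma esym_0 [simp]: "esym n 0 x = 1"
  by (simp add: esym_esymg)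

lemma esym_big: "n < k \<Longrightarrow> esym n k x = 0"
  by (simp add: esym_esymg esymg_big)

lemma binom_rec: "k < n \<Longrightarrow> Suc k * (n choose Suc k) = (n - k) * (n choose k)"
  using times_binomial_minus1_eq[of "Suc k" n] binomial_absorb_comp[of n k] by simp

lemma binom_step:
  assumes ab: "a + 2 \<le> b"
  shows "(n choose a) * (n choose b) \<le> (n choose Suc a) * (n choose (b - 1))"
proof (cases "b \<le> n")
  case False thus ?thesis by (simp add: binomial_eq_0)
next
  case True
  define X where "X = (n choose a) * (n choose b)"
  define Y where "Y = (n choose Suc a) * (n choose (b - 1))"
  define p where "p = Suc a * (n - (b - 1))"
  define q where "q = b * (n - a)"
  have r1: "Suc a * (n choose Suc a) = (n - a) * (n choose a)" using ab True by (intro binom_rec) simp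
  have r2: "b * (n choose b) = (n - (b - 1)) * (n choose (b - 1))"
    using binom_rec[of "b - 1" n] ab True by simp
  have "Y * p = X * q"
    unfolding X_def Y_def p_def q_def
    by (metis (no_types, lifting) mult.assoc mult.commute r1 r2)
  moreover have "p \<le> q" unfolding p_def q_def using ab True by (intro mult_le_mono) auto
  moreover have "p > 0" unfolding p_def using ab True by simp
  ultimately have "X * p \<le> Y * p"
    by (metis mult_le_mono2)
  thus ?thesis using \<open>p > 0\<close> unfolding X_def Y_def by simp
qed

lemma binom_logconc:
  "i \<le> d \<Longrightarrow> (n choose (d - i)) * (n choose (d + i)) \<le> (n choose d)^2"
proof (induction i)
  case 0 thus ?case by (simp add: power2_eq_square)
next
  case (Suc i)
  have "(n choose (d - Suc i)) * (n choose (d + Suc i)) \<le> (n choose Suc (d - Suc i)) * (n choose (d + Suc i - 1))"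
    by (rule binom_step) (use Suc.prems in simp)
  also have "Suc (d - Suc i) = d - i" using Suc.prems by simp
  also have "d + Suc i - 1 = d + i" by simp
  finally show ?case using Suc by simp
qed

lemma binom_logconc_real:
  "i \<le> d \<Longrightarrow> real (n choose (d - i)) * real (n choose (d + i)) \<le> (real (n choose d))^2"
  using binom_logconc[of i d n] by (metis of_nat_le_iff of_nat_mult of_nat_power)

lemma term_bound:
  fixes x :: "nat \<Rightarrow> real"
  assumes i2: "2 \<le> i" and id: "i \<le> d" and din: "d + i \<le> n" and h: "esym n (d-1) x = 0"
    and B0: "B \<ge> 0"
    and L: "\<And>z::nat\<Rightarrow>real. esym (2*i) (i-1) z = 0 \<Longrightarrow> esym (2*i) i (\<lambda>l. (z l)^2) \<le> B * (esym (2*i) i z)^2"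
  shows "\<bar>esym n (d-i) x * esym n (d+i) x\<bar> \<le> real ((2*i) choose i) * B * (esym n d x)^2"
proof (cases "esym n (d-i) x = 0 \<or> esym n (d+i) x = 0")
  case True thus ?thesis using B0 by auto
next
  case False
  obtain z l where l: "l \<noteq> 0" and zl: "\<forall>j\<le>2*i. E n (d - i + j) x = l * E (2*i) j z"
  proof -
    have eq: "d - i + 2*i = d + i" using id by simp
    have "\<exists>z l. l \<noteq> 0 \<and> (\<forall>j\<le>2*i. E n (d - i + j) x = l * E (2*i) j z)"
      by (rule window) (use False din eq in \<open>auto simp: add.commute\<close>)
    thus ?thesis using that by blast
  qed
  have c0: "real (2*i choose i) > 0" "real (2*i choose (i-1)) > 0" "real (n choose d) > 0"
    "real (n choose (d-i)) > 0" "real (n choose (d+i)) > 0"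
    using din id by auto
  have "E n (d - 1) x = l * E (2*i) (i-1) z" using zl[rule_format, of "i-1"] id i2 by simp
  hence "E (2*i) (i-1) z = 0" using h l by (simp add: E_def)
  hence zh: "esym (2*i) (i-1) z = 0" using c0 by (simp add: E_def)
  have Lz: "esym (2*i) i (\<lambda>l. (z l)^2) \<le> B * (esym (2*i) i z)^2" by (rule L[OF zh])
  have e1: "esym n (d-i) x = real (n choose (d-i)) * l"
    using zl[rule_format, of 0] c0 by (simp add: E_def field_simps)
  have e2: "esym n (d+i) x = real (n choose (d+i)) * l * (\<Prod>k<2*i. z k)"
    using zl[rule_format, of "2*i"] c0 id esym_n_n[of "2*i" z] by (simp add: E_def field_simps)
  have e3: "esym n d x = real (n choose d) * l * esym (2*i) i z / real (2*i choose i)"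
    using zl[rule_format, of i] c0 id by (simp add: E_def field_simps)
  define P where "P = (\<Prod>k<2*i. z k)"
  define ez where "ez = esym (2*i) i z"
  define cz where "cz = real (2*i choose i)"
  define cA where "cA = real (n choose (d-i))"
  define cB where "cB = real (n choose (d+i))"
  define cD where "cD = real (n choose d)"
  have am: "cz * \<bar>P\<bar> \<le> B * ez^2"
    using amgm_half[of i z] Lz unfolding P_def ez_def cz_def by linarith
  have pos: "cz > 0" "cA \<ge> 0" "cB \<ge> 0" using c0 unfolding cz_def cA_def cB_def by auto
  have lc: "cA * cB \<le> cD^2" unfolding cA_def cB_def cD_def using binom_logconc_real[OF id] .
  have "\<bar>esym n (d-i) x * esym n (d+i) x\<bar> = cA * cB * l^2 * \<bar>P\<bar>"
    unfolding e1 e2 P_def cA_def cB_def by (simp add: abs_mult power2_eq_square)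
  also have "\<dots> = cA * cB * l^2 * (cz * \<bar>P\<bar>) / cz" using pos by simp
  also have "\<dots> \<le> cA * cB * l^2 * (B * ez^2) / cz"
    using am pos by (intro divide_right_mono mult_left_mono) auto
  also have "\<dots> \<le> cD^2 * l^2 * (B * ez^2) / cz"
    using lc pos B0 by (intro divide_right_mono mult_right_mono) auto
  also have "\<dots> = cz * B * (cD * l * ez / cz)^2"
    using pos by (simp add: power2_eq_square field_simps)
  also have "\<dots> = real ((2*i) choose i) * B * (esym n d x)^2"
    unfolding e3 cz_def cD_def ez_def by simp
  finally show ?thesis .
qed



lemma esym_sq_nonneg: "esym n k (\<lambda>i. (x i)^2) \<ge> 0"
  unfolding esym_def by (intro sum_nonneg prod_nonneg) auto

lemma sum_bound:
  fixes x :: "nat \<Rightarrow> real"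
  shows "esym n d (\<lambda>i. (x i)^2) \<le> (esym n d x)^2 + (\<Sum>j\<in>{..2*d}-{d}. \<bar>esym n j x * esym n (2*d-j) x\<bar>)"
proof -
  have "esym n d (\<lambda>i. (x i)^2) = \<bar>(-1)^d * esym n d (\<lambda>i. (x i)^2)\<bar>"
    using esym_sq_nonneg[of n d x] by (simp add: abs_mult)
  also have "\<dots> = \<bar>\<Sum>j\<le>2*d. (-1)^j * (esym n j x * esym n (2*d-j) x)\<bar>"
    by (simp only: sq_identity)
  also have "\<dots> \<le> (\<Sum>j\<le>2*d. \<bar>(-1)^j * (esym n j x * esym n (2*d-j) x)\<bar>)"
    by (rule sum_abs)
  also have "\<dots> = (\<Sum>j\<le>2*d. \<bar>esym n j x * esym n (2*d-j) x\<bar>)"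
    by (simp add: abs_mult)
  also have "\<dots> = \<bar>esym n d x * esym n (2*d-d) x\<bar> + (\<Sum>j\<in>{..2*d}-{d}. \<bar>esym n j x * esym n (2*d-j) x\<bar>)"
    by (rule sum.remove) auto
  also have "\<bar>esym n d x * esym n (2*d-d) x\<bar> = (esym n d x)^2"
    by (simp add: power2_eq_square)
  finally show ?thesis .
qed

lemma pair_term:
  fixes j d :: nat
  assumes "j \<in> {..2*d} - {d}"
  shows "\<exists>i. 1 \<le> i \<and> i \<le> d \<and> (j = d - i \<or> j = d + i) \<and> \<bar>f j * f (2*d-j)\<bar> = \<bar>f (d-i) * f (d+i) :: real\<bar>"
proof (cases "j < d")
  case True
  hence "2*d - j = d + (d - j)" "d - (d - j) = j" by auto
  thus ?thesis using assms True by (intro exI[of _ "d - j"]) auto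
next
  case False
  hence "d < j" using assms by auto
  moreover have "j \<le> 2*d" using assms by auto
  ultimately have "2*d - j = d - (j - d)" "d + (j - d) = j" by auto
  thus ?thesis using \<open>d < j\<close> \<open>j \<le> 2*d\<close>
    by (intro exI[of _ "j - d"]) (auto simp: mult.commute)
qed

lemma four_pow: "2 \<le> d \<Longrightarrow> 4*d + 2 \<le> (4::nat)^d"
proof (induction d rule: dec_induct)
  case base thus ?case by simp
next
  case (step d) thus ?case by simp
qed

lemma main_2d:
  fixes z :: "nat \<Rightarrow> real"
  assumes "2 \<le> d" and "esym (2*d) (d-1) z = 0"
  shows "esym (2*d) d (\<lambda>l. (z l)^2) \<le> 4^(d*d) * (esym (2*d) d z)^2"
  using assms
proof (induction d arbitrary: z rule: less_induct)
  case (less d)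
  define e where "e j = esym (2*d) j z" for j
  define Y where "Y = (4::real)^(d*d-d) * (e d)^2"
  define Z where "Z = esym (2*d) d (\<lambda>l. (z l)^2)"
  have Cge: "real (2*d choose d) \<ge> 4"
  proof -
    have "2*d choose 1 \<le> 2*d choose d" using less.prems by (intro binomial_mono) auto
    thus ?thesis using less.prems by simp
  qed
  have Zge: "Z \<ge> 0" unfolding Z_def by (rule esym_sq_nonneg)
  have end_term: "\<bar>e 0 * e (2*d)\<bar> \<le> Z / 4"
  proof -
    have "\<bar>e 0 * e (2*d)\<bar> = \<bar>\<Prod>l<2*d. z l\<bar>" by (simp add: e_def esym_n_n)
    also have "\<dots> \<le> Z / real (2*d choose d)"
      using amgm_half[of d z] Cge unfolding Z_def by (simp add: field_simps)
    also have "\<dots> \<le> Z / 4" using Cge Zge by (intro divide_left_mono) auto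
    finally show ?thesis .
  qed
  have mid_term: "\<bar>e j * e (2*d-j)\<bar> \<le> Y" if j: "j \<in> {1..<2*d} - {d}" for j
  proof -
    obtain i where i: "1 \<le> i" "i \<le> d" "j = d - i \<or> j = d + i" "\<bar>e j * e (2*d-j)\<bar> = \<bar>e (d-i) * e (d+i)\<bar>"
      using pair_term[of j d e] j by auto
    have "i \<noteq> d" using i j by auto
    show ?thesis
    proof (cases "i = 1")
      case True
      have "\<bar>e j * e (2*d-j)\<bar> = 0" using i True less.prems by (simp add: e_def)
      moreover have "Y \<ge> 0" unfolding Y_def by simp
      ultimately show ?thesis by auto
    next
      case False
      hence i2: "2 \<le> i" and ilt: "i < d" using i \<open>i \<noteq> d\<close> by auto
      have "\<bar>e (d-i) * e (d+i)\<bar> \<le> real ((2*i) choose i) * 4^(i*i) * (e d)^2"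
        unfolding e_def
      proof (rule term_bound)
        show "2 \<le> i" "i \<le> d" "d + i \<le> 2*d" "esym (2 * d) (d - 1) z = 0" "(0::real) \<le> 4^(i*i)"
          using i2 ilt less.prems by auto
        fix w :: "nat \<Rightarrow> real" assume "esym (2*i) (i-1) w = 0"
        thus "esym (2*i) i (\<lambda>l. (w l)^2) \<le> 4^(i*i) * (esym (2*i) i w)^2"
          using less.IH[OF ilt i2] by blast
      qed
      also have "\<dots> \<le> 4^i * 4^(i*i) * (e d)^2"
      proof -
        have "(2*i) choose i \<le> 2^(2*i)" by (rule binomial_le_pow2)
        hence "real ((2*i) choose i) \<le> 4^i" by (simp add: power_mult)
        thus ?thesis by (intro mult_right_mono) auto
      qed
      also have "\<dots> = 4^(i*i+i) * (e d)^2" by (simp add: power_add)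
      also have "\<dots> \<le> Y" unfolding Y_def
      proof (intro mult_right_mono power_increasing)
        have "i*i + i = i * (i+1)" by simp
        also have "\<dots> \<le> (d-1) * d" using ilt by (intro mult_le_mono) auto
        also have "\<dots> = d*d - d" by (simp add: algebra_simps)
        finally show "i*i + i \<le> d*d - d" .
      qed auto
      finally show ?thesis using i by simp
    qed
  qed
  have split: "{..2*d} - {d} = {0, 2*d} \<union> ({1..<2*d} - {d})" using less.prems by auto
  have "(\<Sum>j\<in>{..2*d}-{d}. \<bar>e j * e (2*d-j)\<bar>) = (\<Sum>j\<in>{0, 2*d}. \<bar>e j * e (2*d-j)\<bar>) + (\<Sum>j\<in>{1..<2*d} - {d}. \<bar>e j * e (2*d-j)\<bar>)"
    unfolding split by (rule sum.union_disjoint) auto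
  also have "(\<Sum>j\<in>{0, 2*d}. \<bar>e j * e (2*d-j)\<bar>) = 2 * \<bar>e 0 * e (2*d)\<bar>"
    using less.prems by (simp add: mult.commute)
  also have "(\<Sum>j\<in>{1..<2*d} - {d}. \<bar>e j * e (2*d-j)\<bar>) \<le> (\<Sum>j\<in>{1..<2*d} - {d}. Y)"
    by (rule sum_mono) (rule mid_term)
  also have "\<dots> \<le> real (2*d) * Y"
  proof -
    have "card ({1..<2*d} - {d}) \<le> 2*d" by (rule order.trans[OF card_Diff_subset_Int[THEN eq_imp_le]]) auto
    moreover have "Y \<ge> 0" unfolding Y_def by simp
    ultimately show ?thesis by (simp add: mult_right_mono)
  qed
  finally have S: "(\<Sum>j\<in>{..2*d}-{d}. \<bar>e j * e (2*d-j)\<bar>) \<le> 2 * (Z/4) + real (2*d) * Y"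
    using end_term by linarith
  have "Z \<le> (e d)^2 + 2 * (Z/4) + real (2*d) * Y"
    using sum_bound[of "2*d" d z] S unfolding Z_def e_def by linarith
  hence Zb: "Z \<le> 2 * (e d)^2 + real (4*d) * Y" by simp
  define Q where "Q = (4::real)^(d*d-d)"
  have Q1: "Q \<ge> 1" unfolding Q_def by simp
  have "Z \<le> (2 + real (4*d) * Q) * (e d)^2" using Zb unfolding Y_def Q_def by (simp add: algebra_simps)
  also have "\<dots> \<le> (real (4*d + 2) * Q) * (e d)^2"
    using Q1 by (intro mult_right_mono) (auto simp: algebra_simps)
  also have "\<dots> \<le> (4^d * Q) * (e d)^2"
  proof (rule mult_right_mono)
    have "4*d + 2 \<le> (4::nat)^d" using four_pow less.prems by simp
    hence "real (4*d+2) \<le> 4^d" by (metis of_nat_le_iff of_nat_numeral of_nat_power)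
    thus "real (4*d + 2) * Q \<le> 4^d * Q" using Q1 by (intro mult_right_mono) auto
  qed auto
  also have "4^d * Q = 4^(d*d)"
  proof -
    have "d + (d*d - d) = d*d" using less.prems by (simp add: le_square)
    thus ?thesis unfolding Q_def by (metis power_add)
  qed
  finally show ?case unfolding Z_def e_def .
qed



definition Hc :: "nat \<Rightarrow> nat \<Rightarrow> nat" where
  "Hc n d = (if n \<le> d + 1 then 0 else 4^(min d (n-d) * min d (n-d) + min d (n-d)))"

lemma main_gen:
  fixes x :: "nat \<Rightarrow> real"
  assumes d2: "2 \<le> d" and dn: "d \<le> n" and h: "esym n (d-1) x = 0"
  shows "esym n d (\<lambda>i. (x i)^2) \<le> (1 + real (2*d) * real (Hc n d)) * (esym n d x)^2"
proof -
  define e where "e j = esym n j x" for j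
  define Y where "Y = real (Hc n d) * (e d)^2"
  have Y0: "Y \<ge> 0" unfolding Y_def by simp
  have tb: "\<bar>e j * e (2*d-j)\<bar> \<le> Y" if j: "j \<in> {..2*d} - {d}" for j
  proof -
    obtain i where i: "1 \<le> i" "i \<le> d" "j = d - i \<or> j = d + i" "\<bar>e j * e (2*d-j)\<bar> = \<bar>e (d-i) * e (d+i)\<bar>"
      using pair_term[of j d e] j by auto
    show ?thesis
    proof (cases "i = 1 \<or> n < d + i")
      case True
      hence "\<bar>e (d-i) * e (d+i)\<bar> = 0" using h by (auto simp: e_def esym_big)
      thus ?thesis using i(4) Y0 by linarith
    next
      case False
      hence i2: "2 \<le> i" and din: "d + i \<le> n" using i by auto
      define t where "t = min d (n-d)"
      have it: "i \<le> t" using i din unfolding t_def by auto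
      have H: "Hc n d = 4^(t*t+t)" using din i2 unfolding Hc_def t_def by auto
      have "\<bar>e (d-i) * e (d+i)\<bar> \<le> real ((2*i) choose i) * 4^(i*i) * (e d)^2"
        unfolding e_def
      proof (rule term_bound)
        show "2 \<le> i" "i \<le> d" "d + i \<le> n" "esym n (d - 1) x = 0" "(0::real) \<le> 4^(i*i)"
          using i2 i din h by auto
        fix w :: "nat \<Rightarrow> real" assume "esym (2*i) (i-1) w = 0"
        thus "esym (2*i) i (\<lambda>l. (w l)^2) \<le> 4^(i*i) * (esym (2*i) i w)^2"
          using main_2d[OF i2] by blast
      qed
      also have "\<dots> \<le> 4^i * 4^(i*i) * (e d)^2"
      proof -
        have "(2*i) choose i \<le> 2^(2*i)" by (rule binomial_le_pow2)
        hence "real ((2*i) choose i) \<le> 4^i" by (simp add: power_mult)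
        thus ?thesis by (intro mult_right_mono) auto
      qed
      also have "\<dots> = 4^(i*i+i) * (e d)^2" by (simp add: power_add)
      also have "\<dots> \<le> 4^(t*t+t) * (e d)^2"
        by (intro mult_right_mono power_increasing add_mono mult_mono it) auto
      also have "\<dots> = Y" unfolding Y_def H by simp
      finally show ?thesis using i by simp
    qed
  qed
  have "esym n d (\<lambda>i. (x i)^2) \<le> (e d)^2 + (\<Sum>j\<in>{..2*d}-{d}. \<bar>e j * e (2*d-j)\<bar>)"
    using sum_bound[of n d x] unfolding e_def .
  also have "(\<Sum>j\<in>{..2*d}-{d}. \<bar>e j * e (2*d-j)\<bar>) \<le> (\<Sum>j\<in>{..2*d}-{d}. Y)"
    by (rule sum_mono) (rule tb)
  also have "\<dots> = real (2*d) * Y" by simp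
  finally show ?thesis unfolding Y_def e_def by (simp add: algebra_simps)
qed

lemma const_ineq:
  assumes d2: "2 \<le> d" and dn: "d \<le> n"
  shows "(n choose d)^2 * (1 + 2*d*Hc n d) \<le> (2*n^(d+1))^(2*(n-d))"
proof (cases "n \<le> d + 1")
  case True
  hence H: "Hc n d = 0" by (simp add: Hc_def)
  have "n choose d \<le> (2*n^(d+1))^(n-d)"
  proof (cases "n = d")
    case True thus ?thesis by simp
  next
    case False
    hence n: "n = d + 1" using True dn by simp
    have "n \<le> n^(d+1)" using n by (intro self_le_power) auto
    moreover have "n choose d = n" using n by simp
    ultimately show ?thesis using n by simp
  qed
  hence A: "(n choose d)^2 \<le> ((2*n^(d+1))^(n-d))^2" by (rule power_mono) simp
  have B: "((2*n^(d+1))^(n-d))^2 = (2*n^(d+1))^(2*(n-d))"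
    by (metis mult.commute power_mult)
  have "(n choose d)^2 * (1 + 2*d*Hc n d) = (n choose d)^2" using H by simp
  also note A
  also note B
  finally show ?thesis .
next
  case False
  define m where "m = n - d"
  define t where "t = min d m"
  have m2: "m \<ge> 2" using False unfolding m_def by simp
  have n4: "n \<ge> 4" using False d2 by simp
  have H: "Hc n d = 4^(t*t+t)" using False unfolding Hc_def t_def m_def by simp
  have c: "n choose d \<le> n^d" by (rule binomial_le_pow[OF dn])
  have h1: "(4::nat)^(t*t+t) \<le> n^(t*t+t)" using n4 by (intro power_mono) auto
  have h2: "1 + 2*d*Hc n d \<le> n^2 * n^(t*t+t)"
  proof -
    have X1: "Hc n d \<ge> 1" unfolding H by simp
    have "1 + 2*d*Hc n d \<le> (1 + 2*d) * Hc n d" using X1 by (simp add: algebra_simps)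
    also have "1 + 2*d \<le> n^2"
    proof -
      have "4*n \<le> n*n" using n4 by (intro mult_right_mono) auto
      moreover have "1 + 2*d \<le> 4*n" using False by linarith
      ultimately show ?thesis unfolding power2_eq_square by linarith
    qed
    hence "(1 + 2*d) * Hc n d \<le> n^2 * Hc n d" by (intro mult_right_mono) auto
    also have "\<dots> \<le> n^2 * n^(t*t+t)" using h1 H by simp
    finally show ?thesis .
  qed
  have "(n choose d)^2 * (1 + 2*d*Hc n d) \<le> (n^d)^2 * (n^2 * n^(t*t+t))"
    using c h2 by (intro mult_mono power_mono) auto
  also have "\<dots> = n^(2*d + 2 + (t*t+t))"
  proof -
    have nd: "(n^d)^2 = n^(2*d)" by (metis power_mult mult.commute)
    have "(n^d)^2 * (n^2 * n^(t*t+t)) = n^(2*d) * (n^2 * n^(t*t+t))" by (simp only: nd)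
    also have "\<dots> = n^(2*d + 2 + (t*t+t))" by (simp only: power_add mult.assoc)
    finally show ?thesis .
  qed
  also have "\<dots> \<le> n^(2*m*(d+1))"
  proof (rule power_increasing)
    define A where "A = m*d"
    define T where "T = t*t"
    have f1: "T \<le> A" unfolding t_def T_def A_def by (intro mult_le_mono) auto
    have f2: "t \<le> m" unfolding t_def by simp
    have f3: "2*d+2 \<le> A + m" using mult_le_mono1[OF m2, of "d+1"] unfolding A_def by (simp add: algebra_simps)
    have f4: "2*m*(d+1) = 2*A + 2*m" unfolding A_def by (simp add: algebra_simps)
    have "2*d + 2 + (T+t) \<le> 2*A + 2*m" using f1 f2 f3 by linarith
    thus "2*d + 2 + (t*t+t) \<le> 2*m*(d+1)" unfolding f4 T_def .
  qed (use n4 in simp)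
  also have "\<dots> \<le> 2^(2*m) * n^(2*m*(d+1))" by simp
  also have "\<dots> = (2*n^(d+1))^(2*m)"
  proof -
    have "(n^(d+1))^(2*m) = n^(2*m*(d+1))" by (metis power_mult mult.commute)
    thus ?thesis by (simp only: power_mult_distrib)
  qed
  finally show ?thesis unfolding m_def .
qed



theorem lemma5:
  fixes n d :: nat and x :: "nat \<Rightarrow> real"
  assumes "1 \<le> d" and "d \<le> n"
    and "esym n (d - 1) x = 0"
  shows "\<bar>esym n d x\<bar> \<ge> real (n choose d) / (2 * real n ^ (d + 1)) ^ (n - d) * \<bar>mprod n d x\<bar>"
proof -
  have d2: "2 \<le> d"
  proof (rule ccontr)
    assume "\<not> 2 \<le> d"
    hence "d = 1" using assms(1) by simp
    thus False using assms(3) by simp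
  qed
  define m where "m = mprod n d x"
  define e where "e = esym n d x"
  define K where "K = 1 + real (2*d) * real (Hc n d)"
  define D where "D = (2 * real n ^ (d + 1)) ^ (n - d)"
  define C where "C = real (n choose d)"
  have m0: "m \<ge> 0" unfolding m_def using mprod_props(1)[OF assms(2)] .
  have mK: "m^2 \<le> K * e^2"
    using mprod_props(2)[OF assms(2), of x] main_gen[OF d2 assms(2) assms(3)]
    unfolding m_def e_def K_def by linarith
  have Dpos: "D > 0" unfolding D_def using d2 assms(2) by simp
  have CK: "C^2 * K \<le> D^2"
  proof -
    have "(n choose d)^2 * (1 + 2*d*Hc n d) \<le> (2*n^(d+1))^(2*(n-d))"
      by (rule const_ineq[OF d2 assms(2)])
    hence "real ((n choose d)^2 * (1 + 2*d*Hc n d)) \<le> real ((2*n^(d+1))^(2*(n-d)))"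
      by (simp only: of_nat_le_iff)
    moreover have "real ((2*n^(d+1))^(2*(n-d))) = D^2"
    proof -
      have "real ((2*n^(d+1))^(2*(n-d))) = (2 * real n ^ (d + 1)) ^ (2*(n-d))" by simp
      also have "\<dots> = ((2 * real n ^ (d + 1)) ^ (n-d))^2" by (metis power_mult mult.commute)
      finally show ?thesis unfolding D_def .
    qed
    moreover have "real ((n choose d)^2 * (1 + 2*d*Hc n d)) = C^2 * K"
      unfolding C_def K_def by (simp add: algebra_simps)
    ultimately show ?thesis by simp
  qed
  have K0: "K \<ge> 0" unfolding K_def by simp
  have "(C / D * m)^2 = C^2 * m^2 / D^2" by (simp add: power_divide power_mult_distrib)
  also have "\<dots> \<le> C^2 * (K * e^2) / D^2"
    using mK Dpos by (intro divide_right_mono mult_left_mono) auto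
  also have "\<dots> = (C^2 * K) * e^2 / D^2" by simp
  also have "\<dots> \<le> D^2 * e^2 / D^2"
    using CK Dpos by (intro divide_right_mono mult_right_mono) auto
  also have "\<dots> = \<bar>e\<bar>^2" using Dpos by simp
  finally have "C / D * m \<le> \<bar>e\<bar>"
    by (rule power2_le_imp_le) simp
  thus ?thesis using m0 unfolding m_def e_def C_def D_def by simp
qed

end
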